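(* In the setting described in the context, let $M^s\subseteq M_{k+n}$ and $w^{m,s}_{k+n}=\sum_{r\in M^s}w^r_{k+n}$. Then $$w^{m,s}_{k+n}\;\le\;\eta_{k+n}\;\le\;w^{m,s}_{k+n}+\Big(\frac{|M_{k+n}|}{|M_k|}-\sum_{r\in M^s}w_k^{r}\Big)\prod_{i=1}^{n}\sigma^i,$$ where $w_k^r$ denotes the prior weight $w_k^{a(r)}$ of the time-$k$ ancestor $a(r)$ of $r$, with repeated ancestors counted with multiplicity.
   Context: Setting (data-association-aware planning over a horizon $n\ge1$ from time $k$). The belief at time $k$ is a mixture over a finite nonempty set $M_k$ of hypotheses, with weights $w_k^j\ge0$ satisfying $\sum_{j\in M_k}w_k^j=1$. Let $D$ be a finite set of data-association realizations. At each look-ahead step $i=1,\dots,n$, every hypothesis $j$ at step $i-1$ spawns exactly $|D|$ child hypotheses $(j,\beta)$, one for each $\beta\in D$. Hence the set $M_{k+n}$ of hypotheses at step $n$ has $|M_{k+n}|=|M_k||D|^n$ elements, and each $r\in M_{k+n}$ has a unique ancestor $a(r)\in M_k$. Fix a sequence of future actions and future observations $Z_{k+1},\dots,Z_{k+n}$ (one path of the belief tree). The unnormalized hypothesis weights are defined recursively by the Bayesian weight update $$w_{k+i}^{(j,\beta)}=w_{k+i-1}^{j}\int \mathbb{P}(Z_{k+i}\mid x_{k+i},\beta)\,\mathbb{P}(\beta\mid x_{k+i})\,b^{j}_{k+i}(x_{k+i})\,dx_{k+i}.$$ Here $b^j_{k+i}$ is the probability density of the state $x_{k+i}$ under hypothesis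 $j$, propagated by the motion model; $\mathbb{P}(\beta\mid x_{k+i})\in[0,1]$; and $\mathbb{P}(Z_{k+i}\mid x_{k+i},\beta)$ is the measurement likelihood. Let $\sigma^i=\max\mathbb{P}(Z_{k+i}\mid x_{k+i})$ denote the maximum of the measurement likelihood of $Z_{k+i}$ over states (and associations), assumed finite. Finally, $\eta_{k+n}=\sum_{r\in M_{k+n}}w_{k+n}^r$. *)

theory Defs
  imports "HOL-Analysis.Analysis"
begin

text \<open>A hypothesis at look-ahead step i is a pair (j, bs) where j is its time-k
ancestor and bs is the list of the i data-association realizations chosen at steps
1..i, most recent first.\<close>

definition hyps :: "'h set \<Rightarrow> 'd set \<Rightarrow> nat \<Rightarrow> ('h \<times> 'd list) set" where
  "hyps Mk D i = {(j, bs). j \<in> Mk \<and> set bs \<subseteq> D \<and> length bs = i}"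

text \<open>Unnormalised hypothesis weights via the Bayesian weight update.
  w0: prior weights at time k; b h: density of x_{k+i} under the parent hypothesis h
  (at step i-1), where i = length of h's list + 1; L i x beta = P(Z_{k+i} | x, beta);
  Pa i x beta = P(beta | x_{k+i}).\<close>

fun hyp_weight ::
  "'x measure \<Rightarrow> ('h \<Rightarrow> real) \<Rightarrow> ('h \<times> 'd list \<Rightarrow> 'x \<Rightarrow> real)
   \<Rightarrow> (nat \<Rightarrow> 'x \<Rightarrow> 'd \<Rightarrow> real) \<Rightarrow> (nat \<Rightarrow> 'x \<Rightarrow> 'd \<Rightarrow> real)
   \<Rightarrow> 'h \<times> 'd list \<Rightarrow> real" where
  "hyp_weight M w0 b L Pa (j, []) = w0 j"
| "hyp_weight M w0 b L Pa (j, beta # bs) =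
     hyp_weight M w0 b L Pa (j, bs) *
     (\<integral>x. L (Suc (length bs)) x beta * Pa (Suc (length bs)) x beta * b (j, bs) x \<partial>M)"

definition max_lik :: "'x measure \<Rightarrow> 'd set \<Rightarrow> (nat \<Rightarrow> 'x \<Rightarrow> 'd \<Rightarrow> real) \<Rightarrow> nat \<Rightarrow> real" where
  "max_lik M D L i = Sup {L i x beta | x beta. x \<in> space M \<and> beta \<in> D}"

end

theory Submission
  imports Defs
begin

theorem theorem3:
  fixes Mk :: "'h set" and D :: "'d set" and n :: nat
    and w0 :: "'h \<Rightarrow> real" and M :: "'x measure"
    and b :: "'h \<times> 'd list \<Rightarrow> 'x \<Rightarrow> real"
    and L :: "nat \<Rightarrow> 'x \<Rightarrow> 'd \<Rightarrow> real"
    and Pa :: "nat \<Rightarrow> 'x \<Rightarrow> 'd \<Rightarrow> real"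
    and Ms :: "('h \<times> 'd list) set"
  assumes "n \<ge> 1"
    and "finite Mk" and "Mk \<noteq> {}" and "finite D"
    and "\<forall>j\<in>Mk. w0 j \<ge> 0" and "(\<Sum>j\<in>Mk. w0 j) = 1"
    and dens: "\<And>i h. 1 \<le> i \<Longrightarrow> i \<le> n \<Longrightarrow> h \<in> hyps Mk D (i - 1) \<Longrightarrow>
        b h \<in> borel_measurable M \<and> (\<forall>x\<in>space M. b h x \<ge> 0) \<and>
        integrable M (b h) \<and> (\<integral>x. b h x \<partial>M) = 1"
    and assoc: "\<And>i x beta. 1 \<le> i \<Longrightarrow> i \<le> n \<Longrightarrow> x \<in> space M \<Longrightarrow> beta \<in> D \<Longrightarrow>
        0 \<le> Pa i x beta \<and> Pa i x beta \<le> 1"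
    and assoc_meas: "\<And>i beta. 1 \<le> i \<Longrightarrow> i \<le> n \<Longrightarrow> beta \<in> D \<Longrightarrow>
        (\<lambda>x. Pa i x beta) \<in> borel_measurable M"
    and lik: "\<And>i x beta. 1 \<le> i \<Longrightarrow> i \<le> n \<Longrightarrow> x \<in> space M \<Longrightarrow> beta \<in> D \<Longrightarrow>
        0 \<le> L i x beta"
    and lik_meas: "\<And>i beta. 1 \<le> i \<Longrightarrow> i \<le> n \<Longrightarrow> beta \<in> D \<Longrightarrow>
        (\<lambda>x. L i x beta) \<in> borel_measurable M"
    and lik_fin: "\<And>i. 1 \<le> i \<Longrightarrow> i \<le> n \<Longrightarrow>
        bdd_above {L i x beta | x beta. x \<in> space M \<and> beta \<in> D}"
    and "Ms \<subseteq> hyps Mk D n"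
  shows "(\<Sum>r\<in>Ms. hyp_weight M w0 b L Pa r) \<le> (\<Sum>r\<in>hyps Mk D n. hyp_weight M w0 b L Pa r)
       \<and> (\<Sum>r\<in>hyps Mk D n. hyp_weight M w0 b L Pa r)
           \<le> (\<Sum>r\<in>Ms. hyp_weight M w0 b L Pa r)
             + (real (card (hyps Mk D n)) / real (card Mk) - (\<Sum>r\<in>Ms. w0 (fst r)))
               * (\<Prod>i=1..n. max_lik M D L i)"
proof -
  let ?W = "hyp_weight M w0 b L Pa"
  let ?s = "max_lik M D L"
  let ?B = "{bs. set bs \<subseteq> D \<and> length bs = n}"
  have hypsn: "hyps Mk D n = Mk \<times> ?B" unfolding hyps_def by auto
  have finB: "finite ?B" using assms(4) by (rule finite_lists_length_eq)
  have finH: "finite (hyps Mk D n)" using hypsn finB assms(2) by simp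
  show ?thesis
  proof (cases "D = {}")
    case True
    then have "hyps Mk D n = {}" using assms(1) unfolding hyps_def by auto
    then show ?thesis using assms(13) by simp
  next
    case Dne: False
    obtain j0 where j0: "j0 \<in> Mk" using assms(3) by blast
    have "(j0, []) \<in> hyps Mk D (1 - 1)" using j0 unfolding hyps_def by simp
    from dens[OF _ assms(1) this] have "(\<integral>x. b (j0, []) x \<partial>M) = 1" by simp
    then have spne: "space M \<noteq> {}" by (metis Bochner_Integration.integral_empty zero_neq_one)
    have Lle: "L i x beta \<le> ?s i" if "1 \<le> i" "i \<le> n" "x \<in> space M" "beta \<in> D" for i x beta
      unfolding max_lik_def by (rule cSup_upper) (use that lik_fin[OF that(1,2)] in auto)
    have s0: "0 \<le> ?s i" if "1 \<le> i" "i \<le> n" for i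
    proof -
      obtain x where "x \<in> space M" using spne by blast
      obtain beta where "beta \<in> D" using Dne by blast
      show ?thesis using lik[OF that \<open>x \<in> space M\<close> \<open>beta \<in> D\<close>] Lle[OF that \<open>x \<in> space M\<close> \<open>beta \<in> D\<close>] by linarith
    qed
    have key: "0 \<le> (\<integral>x. L i x beta * Pa i x beta * b h x \<partial>M) \<and>
               (\<integral>x. L i x beta * Pa i x beta * b h x \<partial>M) \<le> ?s i"
      if i: "1 \<le> i" "i \<le> n" and h: "h \<in> hyps Mk D (i - 1)" and beta: "beta \<in> D" for i h beta
    proof -
      note d = dens[OF i h]
      have meas: "(\<lambda>x. L i x beta * Pa i x beta * b h x) \<in> borel_measurable M"
        using d lik_meas[OF i beta] assoc_meas[OF i beta] by (intro borel_measurable_times) auto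
      have pw: "0 \<le> L i x beta * Pa i x beta * b h x \<and> L i x beta * Pa i x beta * b h x \<le> ?s i * b h x"
        if x: "x \<in> space M" for x
      proof -
        have a: "0 \<le> Pa i x beta" "Pa i x beta \<le> 1" using assoc[OF i x beta] by auto
        have l: "0 \<le> L i x beta" "L i x beta \<le> ?s i" using lik[OF i x beta] Lle[OF i x beta] by auto
        have bb: "0 \<le> b h x" using d x by auto
        have "L i x beta * Pa i x beta \<le> ?s i"
          using mult_mono[OF l(2) a(2)] l a s0[OF i] by simp
        then show ?thesis using bb l a by (simp add: mult_right_mono)
      qed
      have int2: "integrable M (\<lambda>x. ?s i * b h x)" using d by simp
      have int1: "integrable M (\<lambda>x. L i x beta * Pa i x beta * b h x)"
        apply (rule Bochner_Integration.integrable_bound[OF int2 meas])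
        using pw by (auto intro!: AE_I2) (metis abs_ge_self order.trans)
      have "0 \<le> (\<integral>x. L i x beta * Pa i x beta * b h x \<partial>M)"
        using pw by (auto intro!: integral_nonneg_AE AE_I2)
      moreover have "(\<integral>x. L i x beta * Pa i x beta * b h x \<partial>M) \<le> (\<integral>x. ?s i * b h x \<partial>M)"
        using pw by (intro Bochner_Integration.integral_mono[OF int1 int2]) auto
      moreover have "(\<integral>x. ?s i * b h x \<partial>M) = ?s i" using d by simp
      ultimately show ?thesis by linarith
    qed
    have bnd: "0 \<le> ?W (j, bs) \<and> ?W (j, bs) \<le> w0 j * (\<Prod>i=1..length bs. ?s i)"
      if "j \<in> Mk" "set bs \<subseteq> D" "length bs \<le> n" for j bs
      using that
    proof (induction bs)
      case Nil
      then show ?case using assms(5) by simp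
    next
      case (Cons beta bs)
      let ?c = "\<integral>x. L (Suc (length bs)) x beta * Pa (Suc (length bs)) x beta * b (j, bs) x \<partial>M"
      have IH: "0 \<le> ?W (j, bs)" "?W (j, bs) \<le> w0 j * (\<Prod>i=1..length bs. ?s i)"
        using Cons by auto
      have h: "(j, bs) \<in> hyps Mk D (Suc (length bs) - 1)" using Cons.prems unfolding hyps_def by auto
      have c: "0 \<le> ?c" "?c \<le> ?s (Suc (length bs))"
        using key[OF _ _ h, of beta] Cons.prems by auto
      have "?W (j, beta # bs) = ?W (j, bs) * ?c" by simp
      also have "\<dots> \<le> (w0 j * (\<Prod>i=1..length bs. ?s i)) * ?s (Suc (length bs))"
        by (rule mult_mono[OF IH(2) c(2) _ c(1)]) (use IH in linarith)
      also have "\<dots> = w0 j * (\<Prod>i=1..length (beta # bs). ?s i)"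
        by (simp add: prod.nat_ivl_Suc')
      finally show ?case using IH c by simp
    qed
    let ?S = "\<Prod>i=1..n. ?s i"
    have rb: "0 \<le> ?W r \<and> ?W r \<le> w0 (fst r) * ?S" if "r \<in> hyps Mk D n" for r
      using that bnd[of "fst r" "snd r"] unfolding hyps_def by (cases r) auto
    have split: "(\<Sum>r\<in>hyps Mk D n. ?W r) = (\<Sum>r\<in>Ms. ?W r) + (\<Sum>r\<in>hyps Mk D n - Ms. ?W r)"
      using sum.subset_diff[OF assms(13) finH] by (simp add: add.commute)
    have splitw: "(\<Sum>r\<in>hyps Mk D n. w0 (fst r)) = (\<Sum>r\<in>Ms. w0 (fst r)) + (\<Sum>r\<in>hyps Mk D n - Ms. w0 (fst r))"
      using sum.subset_diff[OF assms(13) finH] by (simp add: add.commute)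
    have nn: "0 \<le> (\<Sum>r\<in>hyps Mk D n - Ms. ?W r)" using rb by (auto intro!: sum_nonneg)
    have le: "(\<Sum>r\<in>hyps Mk D n - Ms. ?W r) \<le> (\<Sum>r\<in>hyps Mk D n - Ms. w0 (fst r) * ?S)"
      using rb by (auto intro!: sum_mono)
    have tot: "(\<Sum>r\<in>hyps Mk D n. w0 (fst r)) = real (card ?B)"
    proof -
      have "(\<Sum>r\<in>hyps Mk D n. w0 (fst r)) = (\<Sum>j\<in>Mk. \<Sum>bs\<in>?B. w0 j)"
        unfolding hypsn using sum.Sigma[OF assms(2), of "\<lambda>_. ?B" "\<lambda>j bs. w0 j"] finB
        by (simp add: split_def)
      also have "\<dots> = real (card ?B)" using assms(6) by (simp add: sum_distrib_left[symmetric])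
      finally show ?thesis .
    qed
    have cardH: "real (card (hyps Mk D n)) / real (card Mk) = real (card ?B)"
      unfolding hypsn card_cartesian_product using assms(2,3) by simp
    show ?thesis
      using split splitw nn le tot cardH by (simp add: sum_distrib_right[symmetric] algebra_simps)
  qed
qed

end
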